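(* There exists $N$ such that for all integers $n\geq N$, $$t(n,2)\geq n\log_2 n-4n\log_2\log_2 n-2n.$$
   Context: All graphs are finite, simple and undirected. In an edge-colored graph (adjacent edges may receive the same color), a path is a rainbow path if no two of its edges have the same color. A graph $G$ is $d$-rainbow connected if there is an edge-coloring of $G$ using $d$ colors such that every two distinct vertices of $G$ are joined by a rainbow path. For positive integers $n$ and $d$, $t(n,d)$ denotes the minimum number of edges of a $d$-rainbow connected graph on $n$ vertices. *)

theory Defs
  imports Complex_Main
begin

definition simple_graph :: "'a set \<Rightarrow> 'a set set \<Rightarrow> bool" where
  "simple_graph V E \<longleftrightarrow> finite V \<and> (\<forall>e\<in>E. e \<subseteq> V \<and> card e = 2)"

definition path_edges :: "'a list \<Rightarrow> 'a set list" where
  "path_edges p = map (\<lambda>i. {p ! i, p ! Suc i}) [0..<length p - 1]"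

definition rainbow_path :: "'a set set \<Rightarrow> ('a set \<Rightarrow> 'c) \<Rightarrow> 'a list \<Rightarrow> 'a \<Rightarrow> 'a \<Rightarrow> bool" where
  "rainbow_path E c p u v \<longleftrightarrow>
     p \<noteq> [] \<and> hd p = u \<and> last p = v \<and> distinct p \<and>
     set (path_edges p) \<subseteq> E \<and> distinct (map c (path_edges p))"

definition rainbow_connected :: "nat \<Rightarrow> 'a set \<Rightarrow> 'a set set \<Rightarrow> bool" where
  "rainbow_connected d V E \<longleftrightarrow>
     (\<exists>c :: 'a set \<Rightarrow> nat. c ` E \<subseteq> {..<d} \<and>
        (\<forall>u\<in>V. \<forall>v\<in>V. u \<noteq> v \<longrightarrow> (\<exists>p. rainbow_path E c p u v)))"

text \<open>t(n,d): minimum number of edges of a d-rainbow connected graph on n vertices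
 (vertex set taken to be {0..<n} without loss of generality).\<close>
definition t :: "nat \<Rightarrow> nat \<Rightarrow> nat" where
  "t n d = Min {card E | E. simple_graph {0..<n} E \<and> rainbow_connected d {0..<n} E}"

end

theory Submission
  imports Defs
begin


lemma tangent_sum:
  fixes L :: "'a set" and x :: "'a \<Rightarrow> real"
  assumes fin: "finite L" and ne: "L \<noteq> {}" and M: "M > 0"
    and S: "(\<Sum>v\<in>L. 2 powr (- x v)) \<le> M"
  shows "(\<Sum>v\<in>L. x v) \<ge> real (card L) * log 2 (real (card L) / M)"
proof -
  define l where "l = real (card L)"
  have l: "l > 0" using fin ne by (simp add: l_def card_gt_0_iff)
  define a where "a = log 2 (l / M)"
  have pa: "2 powr (- a) = M / l"
    using l M by (simp add: a_def powr_minus_divide)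
  have tan: "2 powr (- x v) \<ge> 2 powr (- a) * (1 - ln 2 * (x v - a))" for v
  proof -
    have "2 powr (- x v) = 2 powr (- a) * exp (- ln 2 * (x v - a))"
      by (simp add: powr_def exp_add[symmetric] algebra_simps)
    moreover have "exp (- ln 2 * (x v - a)) \<ge> 1 - ln 2 * (x v - a)"
      using exp_ge_add_one_self[of "- ln 2 * (x v - a)"] by simp
    ultimately show ?thesis by (simp add: mult_left_mono)
  qed
  have "(\<Sum>v\<in>L. 2 powr (- a) * (1 - ln 2 * (x v - a))) \<le> (\<Sum>v\<in>L. 2 powr (- x v))"
    by (rule sum_mono) (use tan in auto)
  hence "(\<Sum>v\<in>L. 2 powr (- a) * (1 - ln 2 * (x v - a))) \<le> M" using S by linarith
  moreover have "(\<Sum>v\<in>L. 2 powr (- a) * (1 - ln 2 * (x v - a)))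
      = 2 powr (- a) * (l - ln 2 * ((\<Sum>v\<in>L. x v) - l * a))"
    by (simp add: sum_distrib_left[symmetric] sum_subtractf sum_distrib_left sum_distrib_right l_def algebra_simps)
  ultimately have "M / l * (l - ln 2 * ((\<Sum>v\<in>L. x v) - l * a)) \<le> M" using pa by simp
  moreover have "M / l * (l - ln 2 * ((\<Sum>v\<in>L. x v) - l * a)) = M - M / l * ln 2 * ((\<Sum>v\<in>L. x v) - l * a)"
    using l by (simp add: field_simps)
  ultimately have "M - M / l * ln 2 * ((\<Sum>v\<in>L. x v) - l * a) \<le> M" by linarith
  hence "0 \<le> M / l * ln 2 * ((\<Sum>v\<in>L. x v) - l * a)" by linarith
  moreover have "M / l * ln 2 > 0" using M l by simp
  ultimately have "(\<Sum>v\<in>L. x v) - l * a \<ge> 0"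
    by (metis mult_le_cancel_left_pos mult_zero_right)
  thus ?thesis by (simp add: l_def a_def)
qed

lemma count_T:
  assumes "finite H" "A \<subseteq> H"
  shows "card {T\<in>Pow H. \<forall>w\<in>A. (w\<in>T \<longleftrightarrow> P w)} = 2 ^ (card H - card A)"
proof -
  have "bij_betw (\<lambda>T. T - A) {T\<in>Pow H. \<forall>w\<in>A. (w\<in>T \<longleftrightarrow> P w)} (Pow (H - A))"
    by (rule bij_betw_byWitness[where f'="\<lambda>U. U \<union> {w\<in>A. P w}"]) (use assms in auto)
  hence "card {T\<in>Pow H. \<forall>w\<in>A. (w\<in>T \<longleftrightarrow> P w)} = card (Pow (H - A))"
    by (rule bij_betw_same_card)
  also have "\<dots> = 2 ^ (card H - card A)"
    using assms by (simp add: card_Pow card_Diff_subset finite_subset)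
  finally show ?thesis .
qed

lemma double_count:
  assumes "finite L" "finite X"
  shows "(\<Sum>T\<in>X. card {v\<in>L. Q v T}) = (\<Sum>v\<in>L. card {T\<in>X. Q v T})"
proof -
  have e: "card {v\<in>L. Q v T} = (\<Sum>v\<in>L. if Q v T then 1 else 0)" for T
    using assms by (simp add: sum.If_cases Int_def conj_commute)
  have "(\<Sum>T\<in>X. card {v\<in>L. Q v T}) = (\<Sum>T\<in>X. \<Sum>v\<in>L. if Q v T then 1 else 0)"
    using e by simp
  also have "\<dots> = (\<Sum>v\<in>L. \<Sum>T\<in>X. if Q v T then 1 else 0)" by (rule sum.swap)
  also have "\<dots> = (\<Sum>v\<in>L. card {T\<in>X. Q v T})"
    using assms by (simp add: sum.If_cases Int_def conj_commute)
  finally show ?thesis .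
qed



lemma rainbow_two:
  fixes c :: "nat set \<Rightarrow> nat"
  assumes rp: "rainbow_path E c p u v" and col: "c ` E \<subseteq> {..<2}" and uv: "u \<noteq> v"
  shows "{u,v}\<in>E \<or> (\<exists>w. {u,w}\<in>E \<and> {w,v}\<in>E \<and> c {u,w} \<noteq> c {w,v})"
proof -
  have ne: "p \<noteq> []" and h: "hd p = u" and l: "last p = v" and se: "set (path_edges p) \<subseteq> E"
    and dc: "distinct (map c (path_edges p))" using rp by (auto simp: rainbow_path_def)
  have len: "length (path_edges p) = length p - 1" by (simp add: path_edges_def)
  have "set (map c (path_edges p)) \<subseteq> {..<2}" using se col by auto
  hence "card (set (map c (path_edges p))) \<le> 2"
    by (metis card_lessThan card_mono finite_lessThan)
  hence "length (map c (path_edges p)) \<le> 2" using dc distinct_card by metis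
  hence lp: "length p \<le> 3" using len by simp
  show ?thesis
  proof (cases p)
    case Nil then show ?thesis using ne by simp
  next
    case (Cons a r)
    show ?thesis
    proof (cases r)
      case Nil then show ?thesis using Cons h l uv by simp
    next
      case (Cons b r2)
      show ?thesis
      proof (cases r2)
        case Nil
        have "path_edges p = [{a,b}]" using \<open>p = a # r\<close> Cons Nil by (simp add: path_edges_def)
        then show ?thesis using se h l \<open>p = a # r\<close> Cons Nil by simp
      next
        case (Cons x r3)
        have r3: "r3 = []" using lp \<open>p = a # r\<close> \<open>r = b # r2\<close> Cons by simp
        have pe: "path_edges p = [{a,b},{b,x}]" using \<open>p = a # r\<close> \<open>r = b # r2\<close> Cons r3
          by (simp add: path_edges_def upt_rec)
        then show ?thesis using se dc h l \<open>p = a # r\<close> \<open>r = b # r2\<close> Cons r3 by auto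
      qed
    qed
  qed
qed

definition nb :: "nat set set \<Rightarrow> nat set \<Rightarrow> nat \<Rightarrow> nat set" where
  "nb E A v = {w\<in>A. {v,w}\<in>E}"

lemma edges_LH:
  assumes "finite L" "finite H" "L \<inter> H = {}" "finite E"
  shows "(\<Sum>v\<in>L. card (nb E H v)) \<le> card E"
proof -
  have "(\<Sum>v\<in>L. card (nb E H v)) = card (SIGMA v:L. nb E H v)"
    using assms by (simp add: card_SigmaI nb_def)
  also have "\<dots> \<le> card E"
  proof (rule card_inj_on_le[where f="\<lambda>(v,w). {v,w}"])
    show "inj_on (\<lambda>(v, w). {v, w}) (SIGMA v:L. nb E H v)"
      using assms(3) by (auto simp: inj_on_def nb_def doubleton_eq_iff)
    show "(\<lambda>(v, w). {v, w}) ` (SIGMA v:L. nb E H v) \<subseteq> E" by (auto simp: nb_def)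
  qed (use assms in auto)
  finally show ?thesis .
qed

lemma edges_all:
  assumes "finite A" "finite V" "finite E" "\<forall>e\<in>E. card e = 2"
  shows "(\<Sum>v\<in>A. card (nb E V v)) \<le> 2 * card E"
proof -
  have "(\<Sum>v\<in>A. card (nb E V v)) = card (SIGMA v:A. nb E V v)"
    using assms by (simp add: card_SigmaI nb_def)
  also have "\<dots> \<le> card (E \<times> (UNIV :: bool set))"
  proof (rule card_inj_on_le[where f="\<lambda>(v,w). ({v,w}, v < w)"])
    show "inj_on (\<lambda>(v, w). ({v, w}, v < w)) (SIGMA v:A. nb E V v)"
      by (auto simp: inj_on_def nb_def doubleton_eq_iff)
    show "(\<lambda>(v, w). ({v, w}, v < w)) ` (SIGMA v:A. nb E V v) \<subseteq> E \<times> UNIV" by (auto simp: nb_def)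
  qed (use assms in auto)
  also have "\<dots> = 2 * card E" by (simp add: card_cartesian_product)
  finally show ?thesis .
qed



lemma survivors:
  fixes V :: "nat set" and E :: "nat set set" and c :: "nat set \<Rightarrow> nat" and K :: real
  assumes finV: "finite V" and Esub: "\<forall>e\<in>E. e \<subseteq> V \<and> card e = 2"
    and col: "c ` E \<subseteq> {..<2}"
    and conn: "\<forall>u\<in>V. \<forall>v\<in>V. u \<noteq> v \<longrightarrow> {u,v}\<in>E \<or> (\<exists>w. {u,w}\<in>E \<and> {w,v}\<in>E \<and> c {u,w} \<noteq> c {w,v})"
    and K0: "K \<ge> 0"
    and Ld: "L = {v\<in>V. real (card (nb E V v)) \<le> K}" and Hd: "H = V - L"
  shows "(\<Sum>v\<in>L. 2 powr (- real (card (nb E H v)))) \<le> 1 + K + K^2"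
proof -
  have finL: "finite L" and finH: "finite H" using finV Ld Hd by auto
  have LV: "L \<subseteq> V" using Ld by auto
  define Q where "Q v T = (\<forall>w\<in>nb E H v. (w\<in>T \<longleftrightarrow> c {v,w} = 0))" for v T
  define S where "S T = {v\<in>L. Q v T}" for T
  have degL: "real (card (nb E L x)) \<le> K" if "x \<in> L" for x
  proof -
    have "nb E L x \<subseteq> nb E V x" using LV by (auto simp: nb_def)
    hence "card (nb E L x) \<le> card (nb E V x)" using finV by (intro card_mono) (auto simp: nb_def)
    thus ?thesis using that Ld by auto
  qed
  have clique: "real (card (S T)) \<le> 1 + K + K^2" for T
  proof (cases "S T = {}")
    case True then show ?thesis using K0 by simp
  next
    case False
    then obtain v0 where v0: "v0 \<in> S T" by auto
    have v0L: "v0 \<in> L" using v0 by (simp add: S_def)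
    define X where "X = nb E L v0 \<union> (\<Union>w\<in>nb E L v0. nb E L w)"
    have sub: "S T \<subseteq> insert v0 X"
    proof
      fix u assume u: "u \<in> S T"
      show "u \<in> insert v0 X"
      proof (cases "u = v0")
        case True then show ?thesis by simp
      next
        case False
        have uL: "u \<in> L" using u by (simp add: S_def)
        have "{v0,u}\<in>E \<or> (\<exists>w. {v0,w}\<in>E \<and> {w,u}\<in>E \<and> c {v0,w} \<noteq> c {w,u})"
          using conn[rule_format, of v0 u] v0L uL LV False by (simp add: subset_iff)
        thus ?thesis
        proof
          assume "{v0,u}\<in>E" then show ?thesis using uL by (auto simp: X_def nb_def)
        next
          assume "\<exists>w. {v0,w}\<in>E \<and> {w,u}\<in>E \<and> c {v0,w} \<noteq> c {w,u}"
          then obtain w where w1: "{v0,w}\<in>E" and w2: "{w,u}\<in>E" and cw: "c {v0,w} \<noteq> c {w,u}" by blast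
          have wV: "w \<in> V" using w1 Esub by auto
          have w2': "{u,w}\<in>E" using w2 by (simp add: insert_commute)
          have cw': "c {v0,w} \<noteq> c {u,w}" using cw by (simp add: insert_commute)
          have "w \<notin> H"
          proof
            assume wH: "w \<in> H"
            have "w \<in> nb E H v0" "w \<in> nb E H u" using wH w1 w2' by (auto simp: nb_def)
            hence "(w\<in>T \<longleftrightarrow> c {v0,w} = 0)" "(w\<in>T \<longleftrightarrow> c {u,w} = 0)"
              using v0 u by (auto simp: S_def Q_def)
            moreover have "c {v0,w} < 2" "c {u,w} < 2" using col w1 w2' by auto
            ultimately show False using cw' by auto
          qed
          hence wL: "w \<in> L" using wV Hd by auto
          have "w \<in> nb E L v0" "u \<in> nb E L w" using wL uL w1 w2 by (auto simp: nb_def)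
          thus ?thesis by (auto simp: X_def)
        qed
      qed
    qed
    have finX: "finite X" using finL by (auto simp: X_def nb_def)
    have "card (S T) \<le> card (insert v0 X)" using sub finX by (intro card_mono) auto
    also have "\<dots> \<le> Suc (card X)" by (simp add: card_insert_le_m1 card_insert_if)
    finally have c1: "real (card (S T)) \<le> 1 + real (card X)" by simp
    have x1: "card X \<le> card (nb E L v0) + card (\<Union>w\<in>nb E L v0. nb E L w)"
      unfolding X_def by (rule card_Un_le)
    have x2: "card (\<Union>w\<in>nb E L v0. nb E L w) \<le> (\<Sum>w\<in>nb E L v0. card (nb E L w))"
      using finL by (intro card_UN_le) (auto simp: nb_def)
    have "card X \<le> card (nb E L v0) + (\<Sum>w\<in>nb E L v0. card (nb E L w))"
      using x1 x2 by linarith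
    hence "real (card X) \<le> real (card (nb E L v0) + (\<Sum>w\<in>nb E L v0. card (nb E L w)))"
      by (simp only: of_nat_le_iff)
    hence c2: "real (card X) \<le> real (card (nb E L v0)) + (\<Sum>w\<in>nb E L v0. real (card (nb E L w)))"
      by (simp only: of_nat_add of_nat_sum)
    have "(\<Sum>w\<in>nb E L v0. real (card (nb E L w))) \<le> (\<Sum>w\<in>nb E L v0. K)"
      by (rule sum_mono) (use degL in \<open>auto simp: nb_def\<close>)
    also have "\<dots> = real (card (nb E L v0)) * K" by simp
    also have "\<dots> \<le> K * K" using degL[OF v0L] K0 by (simp add: mult_right_mono)
    finally have c3: "(\<Sum>w\<in>nb E L v0. real (card (nb E L w))) \<le> K * K" .
    show ?thesis using c1 c2 c3 degL[OF v0L] by (simp add: power2_eq_square)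
  qed
  define h where "h = card H"
  have dH: "card (nb E H v) \<le> h" for v
    unfolding h_def using finH by (intro card_mono) (auto simp: nb_def)
  have cntT: "card {T\<in>Pow H. Q v T} = 2 ^ (h - card (nb E H v))" for v
    unfolding Q_def h_def by (rule count_T) (use finH in \<open>auto simp: nb_def\<close>)
  have "(\<Sum>T\<in>Pow H. card (S T)) = (\<Sum>v\<in>L. card {T\<in>Pow H. Q v T})"
    unfolding S_def by (rule double_count) (use finL finH in auto)
  hence eq: "(\<Sum>v\<in>L. real (2 ^ (h - card (nb E H v)))) = (\<Sum>T\<in>Pow H. real (card (S T)))"
    using cntT by (metis (no_types, lifting) of_nat_sum sum.cong)
  have "(\<Sum>T\<in>Pow H. real (card (S T))) \<le> (\<Sum>T\<in>Pow H. 1 + K + K^2)"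
    by (rule sum_mono) (use clique in auto)
  also have "\<dots> = 2 ^ h * (1 + K + K^2)" using finH by (simp add: card_Pow h_def)
  finally have main: "(\<Sum>v\<in>L. real (2 ^ (h - card (nb E H v)))) \<le> 2 ^ h * (1 + K + K^2)"
    using eq by simp
  have pw: "2 powr (- real (card (nb E H v))) = real (2 ^ (h - card (nb E H v))) / 2 ^ h" for v
  proof -
    have "(2::real) ^ h = 2 ^ (h - card (nb E H v)) * 2 ^ card (nb E H v)"
      using dH[of v] by (simp add: power_add[symmetric])
    thus ?thesis by (simp add: powr_minus powr_realpow divide_simps)
  qed
  have "(\<Sum>v\<in>L. 2 powr (- real (card (nb E H v)))) = (\<Sum>v\<in>L. real (2 ^ (h - card (nb E H v)))) / 2 ^ h"
    by (simp add: pw sum_divide_distrib)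
  also have "\<dots> \<le> 1 + K + K^2" using main by (simp add: divide_simps mult.commute)
  finally show ?thesis .
qed



lemma log35: "log 2 (3/5::real) \<le> - 2/3"
proof -
  have "3 * log 2 (3/5::real) = log 2 ((3/5)^3)" by (simp add: log_nat_power)
  also have "\<dots> \<le> log 2 (1/4)" by (subst log_le_cancel_iff) (auto simp: power3_eq_cube)
  also have "\<dots> = -2" using log_pow_cancel[of "2::real" 2] by (simp add: log_divide)
  finally show ?thesis by simp
qed

lemma final_ineq:
  fixes n e h :: real
  assumes n: "2^64 \<le> n" and h0: "h \<ge> 0" and hn: "h \<le> n"
    and hA: "2 * e \<ge> h * (3/4 * (log 2 n)^2)"
    and hB: "n - h > 0 \<Longrightarrow> e \<ge> (n - h) * log 2 ((n - h) / (1 + 3/4 * (log 2 n)^2 + (3/4 * (log 2 n)^2)^2))"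
  shows "e \<ge> n * log 2 n - 4 * n * log 2 (log 2 n) - 2 * n"
proof -
  define m where "m = log 2 n"
  define K where "K = 3/4 * m^2"
  define M where "M = 1 + K + K^2"
  have npos: "n > 0" using n by (smt (verit) zero_less_power)
  have m64: "m \<ge> 64"
  proof -
    have "log 2 ((2::real)^64) \<le> log 2 n" using n npos by (subst log_le_cancel_iff) auto
    moreover have "log 2 ((2::real)^64) = 64" using log_pow_cancel[of "2::real" 64] by simp
    ultimately show ?thesis by (simp add: m_def)
  qed
  have lm0: "log 2 m \<ge> 0" using m64 by simp
  have Kpos: "K > 0" using m64 by (simp add: K_def)
  show ?thesis
  proof (cases "h * K \<ge> 2 * n * m")
    case True
    hence "e \<ge> n * m" using hA by (simp add: K_def m_def)
    moreover have "4 * n * log 2 m \<ge> 0" using npos lm0 by simp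
    ultimately show ?thesis using npos by (simp add: m_def)
  next
    case False
    hence "h * K < 2 * n * m" by simp
    hence hlt: "h < 8 * n / (3 * m)" using m64 Kpos
      by (simp add: K_def field_simps power2_eq_square)
    define q where "q = 1 - 8 / (3 * m)"
    have q0: "q > 0" and q1: "q \<le> 1" and q2: "q \<ge> 1/2" using m64 by (simp_all add: q_def field_simps)
    define l0 where "l0 = n * q"
    have l0eq: "l0 = n - 8 * n / (3 * m)" using m64 by (simp add: l0_def q_def algebra_simps)
    have "n * q \<ge> n * (1/2)" using q2 npos by (intro mult_left_mono) auto
    moreover have "(2::real) \<le> 2^64" by simp
    ultimately have l0ge: "l0 \<ge> 1" using n unfolding l0_def by linarith
    have ll0: "n - h \<ge> l0" using hlt l0eq by linarith
    have lpos: "n - h > 0" using ll0 l0ge by linarith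
    have eB: "e \<ge> (n - h) * log 2 ((n - h) / M)" using hB[OF lpos] by (simp add: M_def K_def m_def)
    have M1: "M \<ge> 1" using Kpos by (simp add: M_def)
    have lM: "log 2 M \<ge> 0" using M1 by simp
    have split: "(n - h) * log 2 ((n - h) / M) = (n - h) * log 2 (n - h) - (n - h) * log 2 M"
      using lpos M1 by (simp add: log_divide algebra_simps)
    have t1: "(n - h) * log 2 M \<le> n * log 2 M" using h0 lM by (simp add: mult_right_mono)
    have t2: "(n - h) * log 2 (n - h) \<ge> l0 * log 2 l0"
    proof -
      have "log 2 l0 \<le> log 2 (n - h)" using ll0 l0ge by simp
      moreover have "log 2 l0 \<ge> 0" using l0ge by simp
      ultimately show ?thesis using ll0 l0ge by (meson mult_mono order_trans zero_le_one)
    qed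
    have t3: "l0 * log 2 l0 = n * q * m + n * q * log 2 q"
      using npos q0 by (simp add: l0_def log_mult m_def algebra_simps)
    have t4: "n * q * log 2 q \<ge> n * log 2 q"
    proof -
      have "log 2 q \<le> 0" using q0 q1 by simp
      hence "q * log 2 q \<ge> 1 * log 2 q" using q1 by (rule mult_right_mono_neg[rotated])
      thus ?thesis using npos by (simp add: mult.assoc mult_left_mono)
    qed
    have t5: "n * q * m = n * m - 8 * n / 3" using m64 by (simp add: q_def field_simps)
    have Mle: "M \<le> 3/5 * q * m^4"
    proof -
      have "M = 1 + 3/4 * m^2 + 9/16 * m^4" by (simp add: M_def K_def eval_nat_numeral algebra_simps)
      moreover have "3/5 * q * m^4 = 3/5 * m^4 - 8/5 * m^3" using m64
        by (simp add: q_def field_simps eval_nat_numeral)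
      moreover have "3/80 * m^4 \<ge> 8/5 * m^3 + 3/4 * m^2 + 1"
      proof -
        have a: "m^4 = m * m^3" by (simp add: eval_nat_numeral)
        have "m * m^3 \<ge> 64 * m^3" by (rule mult_right_mono) (use m64 in auto)
        hence f1: "3/80 * m^4 \<ge> 12/5 * m^3" using a by linarith
        have b: "m^3 = m * m^2" by (simp add: eval_nat_numeral)
        have f2: "m * m^2 \<ge> 64 * m^2" by (rule mult_right_mono) (use m64 in auto)
        have f3: "m^2 \<ge> 1" using m64 by (intro one_le_power) auto
        have "4/5 * m^3 \<ge> 3/4 * m^2 + 1" using b f2 f3 by linarith
        thus ?thesis using f1 by linarith
      qed
      ultimately show ?thesis by linarith
    qed
    have t6: "log 2 M \<le> log 2 (3/5) + log 2 q + 4 * log 2 m"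
    proof -
      have "log 2 M \<le> log 2 (3/5 * q * m^4)" using Mle M1 by simp
      also have "\<dots> = log 2 (3/5) + log 2 q + 4 * log 2 m"
      proof -
        have "log 2 (3/5 * q * m^4) = log 2 (3/5 * q) + log 2 (m^4)"
          using q0 m64 by (intro log_mult_pos) auto
        also have "log 2 (3/5 * q) = log 2 (3/5) + log 2 q" using q0 by (intro log_mult_pos) auto
        also have "log 2 (m^4) = 4 * log 2 m" using m64 by (simp add: log_nat_power)
        finally show ?thesis .
      qed
      finally show ?thesis .
    qed
    have t7: "n * log 2 M \<le> n * (log 2 (3/5) + log 2 q + 4 * log 2 m)"
      using t6 npos by (simp add: mult_left_mono)
    have "e \<ge> n * m - 8 * n / 3 + n * log 2 q - n * (log 2 (3/5) + log 2 q + 4 * log 2 m)"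
      using eB split t1 t2 t3 t4 t5 t7 by linarith
    moreover have "n * log 2 (3/5) \<le> n * (-2/3)" using log35 npos by (intro mult_left_mono) auto
    ultimately show ?thesis by (simp add: m_def algebra_simps)
  qed
qed



lemma bound_graph:
  fixes n :: nat and E :: "nat set set"
  assumes n: "2^64 \<le> n" and sg: "simple_graph {0..<n} E" and rc: "rainbow_connected 2 {0..<n} E"
  shows "real (card E) \<ge> real n * log 2 (real n) - 4 * real n * log 2 (log 2 (real n)) - 2 * real n"
proof -
  define V where "V = {0..<n::nat}"
  have finV: "finite V" by (simp add: V_def)
  have Esub: "\<forall>e\<in>E. e \<subseteq> V \<and> card e = 2" using sg by (simp add: simple_graph_def V_def)
  have finE: "finite E"
  proof (rule finite_subset)
    show "E \<subseteq> Pow V" using Esub by auto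
  qed (use finV in auto)
  obtain c :: "nat set \<Rightarrow> nat" where col: "c ` E \<subseteq> {..<2}"
    and rp: "\<forall>u\<in>V. \<forall>v\<in>V. u \<noteq> v \<longrightarrow> (\<exists>p. rainbow_path E c p u v)"
    using rc by (auto simp: rainbow_connected_def V_def)
  have conn: "\<forall>u\<in>V. \<forall>v\<in>V. u \<noteq> v \<longrightarrow> {u,v}\<in>E \<or> (\<exists>w. {u,w}\<in>E \<and> {w,v}\<in>E \<and> c {u,w} \<noteq> c {w,v})"
  proof (intro ballI impI)
    fix u v assume "u \<in> V" "v \<in> V" "u \<noteq> v"
    then obtain p where "rainbow_path E c p u v" using rp by blast
    thus "{u,v}\<in>E \<or> (\<exists>w. {u,w}\<in>E \<and> {w,v}\<in>E \<and> c {u,w} \<noteq> c {w,v})"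
      using rainbow_two[OF _ col \<open>u \<noteq> v\<close>] by blast
  qed
  define K where "K = 3/4 * (log 2 (real n))^2"
  have K0: "K \<ge> 0" by (simp add: K_def)
  define L where "L = {v\<in>V. real (card (nb E V v)) \<le> K}"
  define H where "H = V - L"
  have finL: "finite L" and finH: "finite H" using finV by (auto simp: L_def H_def)
  have LH: "L \<inter> H = {}" by (auto simp: H_def)
  have cardV: "card L + card H = n"
  proof -
    have "L \<subseteq> V" by (auto simp: L_def)
    hence "card H = card V - card L" unfolding H_def using finV by (simp add: card_Diff_subset finite_subset)
    moreover have "card L \<le> card V" using \<open>L \<subseteq> V\<close> finV by (simp add: card_mono)
    ultimately show ?thesis by (simp add: V_def)
  qed
  have surv: "(\<Sum>v\<in>L. 2 powr (- real (card (nb E H v)))) \<le> 1 + K + K^2"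
    by (rule survivors[OF finV Esub col conn K0 L_def H_def])
  have hA: "2 * real (card E) \<ge> real (card H) * K"
  proof -
    have "(\<Sum>v\<in>H. card (nb E V v)) \<le> 2 * card E"
      using edges_all[OF finH finV finE] Esub by blast
    hence "real (2 * card E) \<ge> (\<Sum>v\<in>H. real (card (nb E V v)))"
      by (metis of_nat_le_iff of_nat_sum)
    moreover have "(\<Sum>v\<in>H. real (card (nb E V v))) \<ge> (\<Sum>v\<in>H. K)"
      by (rule sum_mono) (auto simp: H_def L_def)
    ultimately show ?thesis by simp
  qed
  have hB: "real (card E) \<ge> real (card L) * log 2 (real (card L) / (1 + K + K^2))" if "card L > 0"
  proof -
    have "(\<Sum>v\<in>L. card (nb E H v)) \<le> card E" by (rule edges_LH[OF finL finH LH finE])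
    hence "real (card E) \<ge> (\<Sum>v\<in>L. real (card (nb E H v)))"
      by (metis of_nat_le_iff of_nat_sum)
    moreover have "(\<Sum>v\<in>L. real (card (nb E H v))) \<ge> real (card L) * log 2 (real (card L) / (1 + K + K^2))"
      by (rule tangent_sum[OF finL _ _ surv]) (use that K0 in \<open>auto simp: add_pos_nonneg\<close>)
    ultimately show ?thesis by linarith
  qed
  have nr: "(2::real)^64 \<le> real n" using n by (metis of_nat_le_iff of_nat_numeral of_nat_power)
  show ?thesis
  proof (rule final_ineq[OF nr, where h = "real (card H)"])
    show "0 \<le> real (card H)" by simp
    show "real (card H) \<le> real n" using cardV by linarith
    show "real (card H) * (3/4 * (log 2 (real n))^2) \<le> 2 * real (card E)" using hA by (simp add: K_def)
    assume "0 < real n - real (card H)"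
    hence "card L > 0" using cardV by linarith
    moreover have "real (card L) = real n - real (card H)" using cardV by linarith
    ultimately show "(real n - real (card H)) * log 2 ((real n - real (card H)) /
        (1 + 3/4 * (log 2 (real n))^2 + (3/4 * (log 2 (real n))^2)^2)) \<le> real (card E)"
      using hB by (simp add: K_def)
  qed
qed

lemma set_facts:
  fixes n :: nat
  shows "finite {card E | E. simple_graph {0..<n} E \<and> rainbow_connected 2 {0..<n} E}"
    and "{card E | E. simple_graph {0..<n} E \<and> rainbow_connected 2 {0..<n} E} \<noteq> {}"
proof -
  have "{E. simple_graph {0..<n} E \<and> rainbow_connected 2 {0..<n} E} \<subseteq> Pow (Pow {0..<n})"
    by (auto simp: simple_graph_def)
  hence "finite {E. simple_graph {0..<n} E \<and> rainbow_connected 2 {0..<n} E}"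
    by (rule finite_subset) simp
  thus "finite {card E | E. simple_graph {0..<n} E \<and> rainbow_connected 2 {0..<n} E}"
    by (simp add: setcompr_eq_image)
  define E0 where "E0 = {e. e \<subseteq> {0..<n} \<and> card e = 2}"
  have sg: "simple_graph {0..<n} E0" by (simp add: simple_graph_def E0_def)
  have rc: "rainbow_connected 2 {0..<n} E0"
    unfolding rainbow_connected_def
  proof (intro exI[where x="\<lambda>_. 0"] conjI ballI impI)
    show "(\<lambda>_. 0::nat) ` E0 \<subseteq> {..<2}" by auto
    fix u v assume uv: "u \<in> {0..<n}" "v \<in> {0..<n}" "u \<noteq> v"
    have pe: "path_edges [u,v] = [{u,v}]" by (simp add: path_edges_def)
    show "\<exists>p. rainbow_path E0 (\<lambda>_. 0) p u v"
      by (rule exI[where x="[u,v]"]) (use uv in \<open>auto simp: rainbow_path_def pe E0_def\<close>)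
  qed
  show "{card E | E. simple_graph {0..<n} E \<and> rainbow_connected 2 {0..<n} E} \<noteq> {}"
    using sg rc by blast
qed

theorem proposition1:
  shows "\<exists>N::nat. \<forall>n\<ge>N.
    real (t n 2) \<ge> real n * log 2 (real n) - 4 * real n * log 2 (log 2 (real n)) - 2 * real n"
proof (intro exI allI impI)
  fix n :: nat assume n: "2^64 \<le> n"
  have "t n 2 \<in> {card E | E. simple_graph {0..<n} E \<and> rainbow_connected 2 {0..<n} E}"
    unfolding t_def using set_facts[of n] by (rule Min_in)
  then obtain E where "t n 2 = card E" "simple_graph {0..<n} E" "rainbow_connected 2 {0..<n} E" by blast
  thus "real (t n 2) \<ge> real n * log 2 (real n) - 4 * real n * log 2 (log 2 (real n)) - 2 * real n"
    using bound_graph[OF n] by simp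
qed


end
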